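(* Let $(M,J,g)$ be a $2n$-dimensional Kähler manifold which is an asymptotic harmonic manifold up to order 2, with constants $\Lambda_1,\Lambda_2$. Then $$\Lambda_1^2-\frac{2(n+1)^2}{n+7}\Lambda_2\le 0,$$ and equality holds if and only if $M$ has constant holomorphic sectional curvature $\frac{\tau}{n(n+1)}$.
   Context: Conventions: $R(X,Y)Z=[\nabla_X,\nabla_Y]Z-\nabla_{[X,Y]}Z$; components w.r.t. a local orthonormal frame, $R_{abcd}=g(R(e_a,e_b)e_c,e_d)$, $\rho_{ij}=R_{aija}$, $\tau=\rho_{aa}$, summation over repeated indices. For $x=\xi^ie_i\in T_pM$ write $R_{axxb}=R_{aijb}\xi^i\xi^j$. A Riemannian manifold is an asymptotic harmonic manifold up to order 2 if there are real constants $\Lambda_1,\Lambda_2$ (independent of the point) such that for every $p\in M$ and every $x\in T_pM$: $R_{axxa}=\Lambda_1|x|^2$ and $R_{axxb}R_{bxxa}=\Lambda_2|x|^4$. *)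

theory Defs
  imports "HOL-Analysis.Analysis"
begin

text \<open>Pointwise (frame) model of a 2n-dimensional Kaehler manifold.
  Each tangent space T_pM is identified, via a local orthonormal frame e_1..e_{2n},
  with real^'d carrying the standard inner product; the frame vectors are the
  standard basis vectors axis a 1.  The curvature of M at p is given by its
  components Rc p a b c d = g(R(e_a,e_b)e_c,e_d), and J p is the complex structure
  on T_pM expressed in that frame.\<close>

type_synonym ('p,'d) curv = "'p \<Rightarrow> 'd \<Rightarrow> 'd \<Rightarrow> 'd \<Rightarrow> 'd \<Rightarrow> real"

definition frame :: "'d::finite \<Rightarrow> real^'d" where
  "frame a = axis a 1"

definition Rform :: "('d::finite \<Rightarrow> 'd \<Rightarrow> 'd \<Rightarrow> 'd \<Rightarrow> real)
    \<Rightarrow> real^'d \<Rightarrow> real^'d \<Rightarrow> real^'d \<Rightarrow> real^'d \<Rightarrow> real" where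
  "Rform R x y z w = (\<Sum>a\<in>UNIV. \<Sum>b\<in>UNIV. \<Sum>c\<in>UNIV. \<Sum>d\<in>UNIV.
      R a b c d * (x $ a) * (y $ b) * (z $ c) * (w $ d))"

definition curvature_tensor :: "('d::finite \<Rightarrow> 'd \<Rightarrow> 'd \<Rightarrow> 'd \<Rightarrow> real) \<Rightarrow> bool" where
  "curvature_tensor R \<longleftrightarrow>
     (\<forall>a b c d. R a b c d = - R b a c d) \<and>
     (\<forall>a b c d. R a b c d = - R a b d c) \<and>
     (\<forall>a b c d. R a b c d + R b c a d + R c a b d = 0)"

definition hermitian_structure :: "(real^'d::finite \<Rightarrow> real^'d) \<Rightarrow> bool" where
  "hermitian_structure J \<longleftrightarrow> linear J \<and> (\<forall>x. J (J x) = - x) \<and>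
     (\<forall>x y. J x \<bullet> J y = x \<bullet> y)"

text \<open>Kaehler curvature identity R(X,Y)JZ = J R(X,Y)Z, i.e. R(x,y,Jz,Jw) = R(x,y,z,w).\<close>
definition kaehler_curvature ::
  "('d::finite \<Rightarrow> 'd \<Rightarrow> 'd \<Rightarrow> 'd \<Rightarrow> real) \<Rightarrow> (real^'d \<Rightarrow> real^'d) \<Rightarrow> bool" where
  "kaehler_curvature R J \<longleftrightarrow> curvature_tensor R \<and> hermitian_structure J \<and>
     (\<forall>x y z w. Rform R x y (J z) (J w) = Rform R x y z w)"

definition scalar_curv :: "('d::finite \<Rightarrow> 'd \<Rightarrow> 'd \<Rightarrow> 'd \<Rightarrow> real) \<Rightarrow> real" where
  "scalar_curv R = (\<Sum>a\<in>UNIV. \<Sum>i\<in>UNIV. R a i i a)"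

definition asymptotic_harmonic2 ::
  "'p set \<Rightarrow> ('p,'d::finite) curv \<Rightarrow> real \<Rightarrow> real \<Rightarrow> bool" where
  "asymptotic_harmonic2 M R L1 L2 \<longleftrightarrow>
     (\<forall>p\<in>M. \<forall>x::real^'d.
        (\<Sum>a\<in>UNIV. Rform (R p) (frame a) x x (frame a)) = L1 * norm x ^ 2 \<and>
        (\<Sum>a\<in>UNIV. \<Sum>b\<in>UNIV. Rform (R p) (frame a) x x (frame b) *
                                Rform (R p) (frame b) x x (frame a)) = L2 * norm x ^ 4)"

definition const_holo_sec_curv ::
  "('d::finite \<Rightarrow> 'd \<Rightarrow> 'd \<Rightarrow> 'd \<Rightarrow> real) \<Rightarrow> (real^'d \<Rightarrow> real^'d) \<Rightarrow> real \<Rightarrow> bool" where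
  "const_holo_sec_curv R J c \<longleftrightarrow> (\<forall>x. Rform R x (J x) (J x) x = c * norm x ^ 4)"

end

theory Submission
  imports Defs
begin


lemma frame_nth: "frame a $ i = (if i = a then 1 else 0)"
  by (simp add: frame_def axis_def)

lemma inner_frame: "frame a \<bullet> frame b = (if a = b then 1 else 0)"
  by (simp add: frame_def inner_axis_axis)

lemma inner_frame_left: "frame a \<bullet> x = x $ a"
  by (simp add: frame_def inner_axis')

lemma inner_frame_right: "x \<bullet> frame a = x $ a"
  by (simp add: frame_def inner_axis)

lemma vec_expand: "x = (\<Sum>a\<in>UNIV. (x $ a) *\<^sub>R frame a)"
proof -
  have "x = (\<Sum>i\<in>UNIV. (x$i) *s axis i (1::real))" by (simp add: basis_expansion)
  then show ?thesis by (simp add: frame_def scalar_mult_eq_scaleR)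
qed

lemma inner_sum_comp: "(x::real^'d::finite) \<bullet> y = (\<Sum>i\<in>UNIV. x $ i * y $ i)"
  by (simp add: inner_vec_def)


lemma sum_frame_left: "(\<Sum>i\<in>UNIV. frame a $ i * g i) = (g a :: real)"
  by (subst sum.cong[OF refl, of _ _ "\<lambda>i. if i = a then g a else 0"]) (auto simp: frame_nth)

lemma sum_frame_right: "(\<Sum>i\<in>UNIV. g i * frame a $ i) = (g a :: real)"
  by (subst sum.cong[OF refl, of _ _ "\<lambda>i. if i = a then g a else 0"]) (auto simp: frame_nth)

lemma Rform_1: "Rform R x y z w = (\<Sum>a\<in>UNIV. x $ a * (\<Sum>b\<in>UNIV. \<Sum>c\<in>UNIV. \<Sum>d\<in>UNIV.
      R a b c d * (y $ b) * (z $ c) * (w $ d)))"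
  unfolding Rform_def by (simp add: sum_distrib_left mult_ac)

lemma Rform_frame1: "Rform R (frame a) y z w = (\<Sum>b\<in>UNIV. \<Sum>c\<in>UNIV. \<Sum>d\<in>UNIV.
      R a b c d * (y $ b) * (z $ c) * (w $ d))"
  unfolding Rform_1 by (rule sum_frame_left)


lemma Rform_P12: "Rform R x y z w = Rform (\<lambda>a b c d. R b a c d) y x z w"
  unfolding Rform_def by (subst sum.swap) (simp add: mult_ac)

lemma Rform_P34: "Rform R x y z w = Rform (\<lambda>a b c d. R a b d c) x y w z"
  unfolding Rform_def by (subst (2) sum.swap) (simp add: mult_ac)

lemma Rform_P23: "Rform R x y z w = Rform (\<lambda>a b c d. R a c b d) x z y w"
  unfolding Rform_def by (subst (2) sum.swap) (simp add: mult_ac)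

lemma Rform_P13: "Rform R x y z w = Rform (\<lambda>a b c d. R c b a d) z y x w"
  apply (subst Rform_P12) apply (subst Rform_P23) apply (subst Rform_P12) by simp

lemma Rform_P14: "Rform R x y z w = Rform (\<lambda>a b c d. R d b c a) w y z x"
  apply (subst Rform_P34) apply (subst Rform_P13) apply (subst Rform_P34) by simp


lemma Rform_exp1: "Rform R x y z w = (\<Sum>a\<in>UNIV. x $ a * Rform R (frame a) y z w)"
  unfolding Rform_frame1 by (rule Rform_1)

lemma Rform_exp2: "Rform R x y z w = (\<Sum>a\<in>UNIV. y $ a * Rform R x (frame a) z w)"
  apply (subst Rform_P12) apply (subst Rform_exp1) apply (subst (2) Rform_P12) by simp

lemma Rform_exp3: "Rform R x y z w = (\<Sum>a\<in>UNIV. z $ a * Rform R x y (frame a) w)"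
  apply (subst Rform_P13) apply (subst Rform_exp1) apply (subst (2) Rform_P13) by simp

lemma Rform_exp4: "Rform R x y z w = (\<Sum>a\<in>UNIV. w $ a * Rform R x y z (frame a))"
  apply (subst Rform_P14) apply (subst Rform_exp1) apply (subst (2) Rform_P14) by simp

lemma Rform_frames: "Rform R (frame a) (frame b) (frame c) (frame d) = R a b c d"
proof -
  have "Rform R (frame a) (frame b) (frame c) (frame d) =
     (\<Sum>b'\<in>UNIV. frame b $ b' * (\<Sum>c'\<in>UNIV. frame c $ c' * (\<Sum>d'\<in>UNIV. frame d $ d' * R a b' c' d')))"
    unfolding Rform_frame1 by (simp add: sum_distrib_left mult_ac)
  also have "\<dots> = R a b c d" by (simp add: sum_frame_left)
  finally show ?thesis .
qed


lemma Rform_add1: "Rform R (x + x') y z w = Rform R x y z w + Rform R x' y z w"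
  unfolding Rform_def by (simp add: algebra_simps sum.distrib)
lemma Rform_add2: "Rform R x (y + y') z w = Rform R x y z w + Rform R x y' z w"
  unfolding Rform_def by (simp add: algebra_simps sum.distrib)
lemma Rform_add3: "Rform R x y (z + z') w = Rform R x y z w + Rform R x y z' w"
  unfolding Rform_def by (simp add: algebra_simps sum.distrib)
lemma Rform_add4: "Rform R x y z (w + w') = Rform R x y z w + Rform R x y z w'"
  unfolding Rform_def by (simp add: algebra_simps sum.distrib)
lemma Rform_neg1: "Rform R (- x) y z w = - Rform R x y z w"
  unfolding Rform_def by (simp add: sum_negf)
lemma Rform_neg2: "Rform R x (- y) z w = - Rform R x y z w"
  unfolding Rform_def by (simp add: sum_negf)
lemma Rform_neg3: "Rform R x y (- z) w = - Rform R x y z w"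
  unfolding Rform_def by (simp add: sum_negf)
lemma Rform_neg4: "Rform R x y z (- w) = - Rform R x y z w"
  unfolding Rform_def by (simp add: sum_negf)
lemma Rform_diff1: "Rform R (x - x') y z w = Rform R x y z w - Rform R x' y z w"
  using Rform_add1[of R x "-x'"] Rform_neg1[of R x'] by simp
lemma Rform_diff2: "Rform R x (y - y') z w = Rform R x y z w - Rform R x y' z w"
  using Rform_add2[of R x y "-y'"] Rform_neg2[of R x y'] by simp
lemma Rform_diff3: "Rform R x y (z - z') w = Rform R x y z w - Rform R x y z' w"
  using Rform_add3[of R x y z "-z'"] Rform_neg3[of R x y z'] by simp
lemma Rform_diff4: "Rform R x y z (w - w') = Rform R x y z w - Rform R x y z w'"
  using Rform_add4[of R x y z w "-w'"] Rform_neg4[of R x y z w'] by simp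

lemmas Rform_lin = Rform_add1 Rform_add2 Rform_add3 Rform_add4 Rform_neg1 Rform_neg2 Rform_neg3 Rform_neg4
  Rform_diff1 Rform_diff2 Rform_diff3 Rform_diff4

lemma Rform_tensor_diff: "Rform (\<lambda>a b c d. R a b c d - k * S a b c d) x y z w = Rform R x y z w - k * Rform S x y z w"
  unfolding Rform_def by (simp add: algebra_simps sum_subtractf sum_distrib_left)

lemma Rform_tensor_add: "Rform (\<lambda>a b c d. R a b c d + S a b c d) x y z w = Rform R x y z w + Rform S x y z w"
  unfolding Rform_def by (simp add: algebra_simps sum.distrib)

lemma Rform_tensor_neg: "Rform (\<lambda>a b c d. - R a b c d) x y z w = - Rform R x y z w"
  unfolding Rform_def by (simp add: sum_negf)

lemma Rform_zero: "Rform (\<lambda>a b c d. 0) x y z w = 0"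
  unfolding Rform_def by simp

lemma Rform_eta: "Rform (\<lambda>a b c d. R a b c d) = Rform R" by simp

lemma curv_skew12: "curvature_tensor R \<Longrightarrow> R b a c d = - R a b c d"
  unfolding curvature_tensor_def by metis
lemma curv_skew34: "curvature_tensor R \<Longrightarrow> R a b d c = - R a b c d"
  unfolding curvature_tensor_def by metis
lemma curv_bianchi: "curvature_tensor R \<Longrightarrow> R a b c d + R b c a d + R c a b d = 0"
  unfolding curvature_tensor_def by metis

lemma curv_pair:
  assumes C: "curvature_tensor R"
  shows "R c d a b = R a b c d"
proof -
  note s1 = curv_skew12[OF C] and s2 = curv_skew34[OF C] and b = curv_bianchi[OF C]
  show ?thesis
    using b[of a b c d] b[of b c d a] b[of c d a b] b[of d a b c]
      s1[of a b c d] s1[of b c a d] s1[of c a b d] s1[of b c d a] s1[of c d b a] s1[of d b c a]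
      s1[of c d a b] s1[of d a c b] s1[of a c d b] s1[of d a b c] s1[of a b d c] s1[of b d a c]
      s2[of a b c d] s2[of b c a d] s2[of c a b d] s2[of b c d a] s2[of c d b a] s2[of d b c a]
      s2[of c d a b] s2[of d a c b] s2[of a c d b] s2[of d a b c] s2[of a b d c] s2[of b d a c]
    by linarith
qed

lemma Rform_P24: "Rform R x y z w = Rform (\<lambda>a b c d. R a d c b) x w z y"
  apply (subst Rform_P12) apply (subst Rform_P14) apply (subst Rform_P12) by simp

lemma Rform_skew12: "curvature_tensor R \<Longrightarrow> Rform R y x z w = - Rform R x y z w"
proof -
  assume C: "curvature_tensor R"
  have "(\<lambda>a b c d. R b a c d) = (\<lambda>a b c d. - R a b c d)"
    using curv_skew12[OF C] by (intro ext) metis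
  then show ?thesis by (subst Rform_P12) (simp only: Rform_tensor_neg)
qed

lemma Rform_skew34: "curvature_tensor R \<Longrightarrow> Rform R x y w z = - Rform R x y z w"
proof -
  assume C: "curvature_tensor R"
  have "(\<lambda>a b c d. R a b d c) = (\<lambda>a b c d. - R a b c d)"
    using curv_skew34[OF C] by (intro ext) metis
  then show ?thesis by (subst Rform_P34) (simp only: Rform_tensor_neg)
qed

lemma Rform_pair: "curvature_tensor R \<Longrightarrow> Rform R z w x y = Rform R x y z w"
proof -
  assume C: "curvature_tensor R"
  have "(\<lambda>a b c d. R c d a b) = R"
    using curv_pair[OF C] by (intro ext) metis
  then show ?thesis apply (subst Rform_P13) apply (subst Rform_P24) by simp
qed

lemma Rform_bianchi:
  assumes C: "curvature_tensor R"
  shows "Rform R x y z w + Rform R y z x w + Rform R z x y w = 0"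
proof -
  have e1: "Rform R y z x w = Rform (\<lambda>a b c d. R b c a d) x y z w"
    using Rform_P13[of R y z x w] Rform_P23[of "\<lambda>a b c d. R c b a d" x z y w] by simp
  have e2: "Rform R z x y w = Rform (\<lambda>a b c d. R c a b d) x y z w"
    using Rform_P12[of R z x y w] Rform_P23[of "\<lambda>a b c d. R b a c d" x z y w] by simp
  have "Rform R x y z w + Rform R y z x w + Rform R z x y w =
     Rform (\<lambda>a b c d. R a b c d + R b c a d + R c a b d) x y z w"
    unfolding e1 e2 Rform_tensor_add[symmetric] by simp
  also have "\<dots> = 0" using curv_bianchi[OF C] by (simp add: Rform_zero)
  finally show ?thesis .
qed



section \<open>Hermitian structure\<close>

lemma herm_linear: "hermitian_structure J \<Longrightarrow> linear J"
  by (simp add: hermitian_structure_def)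
lemma herm_JJ: "hermitian_structure J \<Longrightarrow> J (J x) = - x"
  by (simp add: hermitian_structure_def)
lemma herm_inner: "hermitian_structure J \<Longrightarrow> J x \<bullet> J y = x \<bullet> y"
  by (simp add: hermitian_structure_def)
lemma herm_add: "hermitian_structure J \<Longrightarrow> J (x + y) = J x + J y"
  by (simp add: hermitian_structure_def linear_add)
lemma herm_neg: "hermitian_structure J \<Longrightarrow> J (- x) = - J x"
  by (simp add: hermitian_structure_def linear_neg)
lemma herm_diff: "hermitian_structure J \<Longrightarrow> J (x - y) = J x - J y"
  by (simp add: hermitian_structure_def linear_diff)
lemma herm_scale: "hermitian_structure J \<Longrightarrow> J (c *\<^sub>R x) = c *\<^sub>R J x"
  by (simp add: hermitian_structure_def linear_cmul)
lemma herm_skew: "hermitian_structure J \<Longrightarrow> J x \<bullet> y = - (x \<bullet> J y)"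
proof -
  assume H: "hermitian_structure J"
  have "J x \<bullet> y = J (J x) \<bullet> J y" using herm_inner[OF H] by simp
  also have "\<dots> = - (x \<bullet> J y)" using herm_JJ[OF H] by simp
  finally show ?thesis .
qed
lemma herm_orth: "hermitian_structure J \<Longrightarrow> J x \<bullet> x = 0"
  using herm_skew[of J x x] by (simp add: inner_commute)
lemma herm_norm: "hermitian_structure J \<Longrightarrow> norm (J x) = norm x"
  using herm_inner[of J x x] by (simp add: norm_eq_sqrt_inner)

lemma linear_real_expand:
  assumes "linear (f :: real^'d::finite \<Rightarrow> real)"
  shows "f x = (\<Sum>a\<in>UNIV. x $ a * f (frame a))"
proof -
  have "f x = f (\<Sum>a\<in>UNIV. (x $ a) *\<^sub>R frame a)" using vec_expand[of x] by simp
  also have "\<dots> = (\<Sum>a\<in>UNIV. x $ a * f (frame a))"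
    using assms by (simp add: linear_sum linear_cmul)
  finally show ?thesis .
qed

lemma herm_comp: "hermitian_structure J \<Longrightarrow> J x $ k = (\<Sum>a\<in>UNIV. x $ a * J (frame a) $ k)"
proof -
  assume H: "hermitian_structure J"
  have "linear (\<lambda>x. J x $ k)"
    using herm_linear[OF H] by (intro linearI) (simp_all add: linear_add linear_cmul)
  from linear_real_expand[OF this] show ?thesis .
qed

lemma herm_col: "hermitian_structure J \<Longrightarrow> J (frame a) $ k = - (J (frame k) $ a)"
  using herm_skew[of J "frame a" "frame k"] by (simp add: inner_frame_right inner_frame_left)

lemma herm_rows: "hermitian_structure J \<Longrightarrow>
   (\<Sum>i\<in>UNIV. J (frame k) $ i * J (frame l) $ i) = (if k = l then 1 else 0)"
proof -
  assume H: "hermitian_structure J"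
  have h: "J (frame k) \<bullet> J (frame l) = (if k = l then 1 else 0)"
    using herm_inner[OF H, of "frame k" "frame l"] inner_frame[of k l] by simp
  then show ?thesis by (simp add: inner_sum_comp)
qed

lemma herm_cols: "hermitian_structure J \<Longrightarrow>
   (\<Sum>a\<in>UNIV. J (frame a) $ k * J (frame a) $ l) = (if k = l then 1 else 0)"
proof -
  assume H: "hermitian_structure J"
  have "\<And>a. J (frame a) $ k * J (frame a) $ l = J (frame k) $ a * J (frame l) $ a"
  proof -
    fix a
    have "J (frame a) $ k = - (J (frame k) $ a)" "J (frame a) $ l = - (J (frame l) $ a)"
      using herm_col[OF H] by blast+
    then show "J (frame a) $ k * J (frame a) $ l = J (frame k) $ a * J (frame l) $ a" by simp
  qed
  then show ?thesis using herm_rows[OF H, of k l] by simp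
qed

section \<open>Kaehler curvature consequences\<close>

lemma kc_curv: "kaehler_curvature R J \<Longrightarrow> curvature_tensor R"
  by (simp add: kaehler_curvature_def)
lemma kc_herm: "kaehler_curvature R J \<Longrightarrow> hermitian_structure J"
  by (simp add: kaehler_curvature_def)
lemma kc_K1: "kaehler_curvature R J \<Longrightarrow> Rform R x y (J z) (J w) = Rform R x y z w"
  by (simp add: kaehler_curvature_def)
lemma kc_K2: "kaehler_curvature R J \<Longrightarrow> Rform R x y (J z) w = - Rform R x y z (J w)"
proof -
  assume K: "kaehler_curvature R J"
  have "Rform R x y (J z) (J (J w)) = Rform R x y z (J w)" by (rule kc_K1[OF K])
  then show ?thesis using herm_JJ[OF kc_herm[OF K]] by (simp add: Rform_neg4)
qed
lemma kc_K3: "kaehler_curvature R J \<Longrightarrow> Rform R (J x) (J y) z w = Rform R x y z w"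
proof -
  assume K: "kaehler_curvature R J"
  note P = Rform_pair[OF kc_curv[OF K]]
  have "Rform R (J x) (J y) z w = Rform R z w (J x) (J y)" using P by simp
  also have "\<dots> = Rform R z w x y" by (rule kc_K1[OF K])
  also have "\<dots> = Rform R x y z w" using P by simp
  finally show ?thesis .
qed
lemma kc_K4: "kaehler_curvature R J \<Longrightarrow> Rform R (J x) y z w = - Rform R x (J y) z w"
proof -
  assume K: "kaehler_curvature R J"
  have "Rform R (J x) (J (J y)) z w = Rform R x (J y) z w" by (rule kc_K3[OF K])
  then show ?thesis using herm_JJ[OF kc_herm[OF K]] by (simp add: Rform_neg2)
qed



definition Tf :: "(real^'d::finite \<Rightarrow> real^'d) \<Rightarrow> real^'d \<Rightarrow> real^'d \<Rightarrow> real^'d \<Rightarrow> real^'d \<Rightarrow> real" where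
  "Tf J x y z w = (x \<bullet> w) * (y \<bullet> z) - (x \<bullet> z) * (y \<bullet> w) + (J x \<bullet> w) * (J y \<bullet> z)
     - (J x \<bullet> z) * (J y \<bullet> w) - 2 * (J x \<bullet> y) * (J z \<bullet> w)"

definition Tt :: "(real^'d::finite \<Rightarrow> real^'d) \<Rightarrow> 'd \<Rightarrow> 'd \<Rightarrow> 'd \<Rightarrow> 'd \<Rightarrow> real" where
  "Tt J a b c d = Tf J (frame a) (frame b) (frame c) (frame d)"

context
  fixes J :: "real^'d::finite \<Rightarrow> real^'d"
  assumes H: "hermitian_structure J"
begin

lemma Tf_lin1: "linear (\<lambda>x. Tf J x y z w)"
  unfolding Tf_def
  by (intro linearI) (simp_all add: herm_add[OF H] herm_scale[OF H] inner_add_left algebra_simps)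
lemma Tf_lin2: "linear (\<lambda>y. Tf J x y z w)"
  unfolding Tf_def
  by (intro linearI) (simp_all add: herm_add[OF H] herm_scale[OF H] inner_add_left inner_add_right algebra_simps)
lemma Tf_lin3: "linear (\<lambda>z. Tf J x y z w)"
  unfolding Tf_def
  by (intro linearI) (simp_all add: herm_add[OF H] herm_scale[OF H] inner_add_left inner_add_right algebra_simps)
lemma Tf_lin4: "linear (\<lambda>w. Tf J x y z w)"
  unfolding Tf_def
  by (intro linearI) (simp_all add: herm_add[OF H] herm_scale[OF H] inner_add_left inner_add_right algebra_simps)

lemma Rform_Tt: "Rform (Tt J) x y z w = Tf J x y z w"
proof -
  have s4: "Rform (Tt J) (frame a) (frame b) (frame c) w = Tf J (frame a) (frame b) (frame c) w" for a b c
    apply (subst Rform_exp4) apply (subst linear_real_expand[OF Tf_lin4])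
    by (simp add: Rform_frames Tt_def)
  have s3: "Rform (Tt J) (frame a) (frame b) z w = Tf J (frame a) (frame b) z w" for a b
    apply (subst Rform_exp3) apply (subst linear_real_expand[OF Tf_lin3])
    by (simp add: s4)
  have s2: "Rform (Tt J) (frame a) y z w = Tf J (frame a) y z w" for a
    apply (subst Rform_exp2) apply (subst linear_real_expand[OF Tf_lin2])
    by (simp add: s3)
  show ?thesis
    apply (subst Rform_exp1) apply (subst linear_real_expand[OF Tf_lin1])
    by (simp add: s2)
qed

lemma Jskew': "J y \<bullet> x = - (J x \<bullet> y)"
  using herm_skew[OF H, of y x] by (simp add: inner_commute)

lemma Tf_skew12: "Tf J y x z w = - Tf J x y z w"
  unfolding Tf_def Jskew'[of y x] by (simp add: inner_commute algebra_simps)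

lemma Tf_skew34: "Tf J x y w z = - Tf J x y z w"
  unfolding Tf_def Jskew'[of w z] by (simp add: inner_commute algebra_simps herm_skew[OF H, of z w])

lemma Tf_bianchi: "Tf J x y z w + Tf J y z x w + Tf J z x y w = 0"
proof -
  have a: "J z \<bullet> x = - (J x \<bullet> z)" "J y \<bullet> x = - (J x \<bullet> y)" "J z \<bullet> y = - (J y \<bullet> z)"
    using Jskew' by blast+
  show ?thesis unfolding Tf_def a by (simp add: inner_commute algebra_simps)
qed

lemma Tf_K1: "Tf J x y (J z) (J w) = Tf J x y z w"
proof -
  have a: "x \<bullet> J w = - (J x \<bullet> w)" "y \<bullet> J z = - (J y \<bullet> z)" "x \<bullet> J z = - (J x \<bullet> z)"
      "y \<bullet> J w = - (J y \<bullet> w)" "z \<bullet> J w = - (J z \<bullet> w)"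
    using herm_skew[OF H, of x w] herm_skew[OF H, of y z] herm_skew[OF H, of x z] herm_skew[OF H, of y w]
      herm_skew[OF H, of z w] by simp_all
  show ?thesis unfolding Tf_def herm_JJ[OF H] herm_inner[OF H] by (simp add: a algebra_simps)
qed

lemma Tt_curv: "curvature_tensor (Tt J)"
  unfolding curvature_tensor_def Tt_def using Tf_skew12 Tf_skew34 Tf_bianchi by blast

lemma Tt_kaehler: "kaehler_curvature (Tt J) J"
  unfolding kaehler_curvature_def using Tt_curv H by (simp add: Rform_Tt Tf_K1)

lemma Tf_holo: "Tf J x (J x) (J x) x = 4 * norm x ^ 4"
proof -
  have n: "norm x ^ 4 = (x \<bullet> x) * (x \<bullet> x)"
    by (simp add: power2_norm_eq_inner[symmetric] power4_eq_xxxx power2_eq_square)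
  have o: "x \<bullet> J x = 0" "J x \<bullet> x = 0" using herm_orth[OF H, of x] by (simp_all add: inner_commute)
  show ?thesis unfolding Tf_def n using o herm_JJ[OF H] herm_inner[OF H] by (simp add: inner_commute)
qed

end


lemma RF4: "Rform R (frame a) (frame b) (frame c) v = (\<Sum>d\<in>UNIV. v $ d * R a b c d)"
  by (subst Rform_exp4) (simp add: Rform_frames)

lemma RF34: "Rform R (frame a) (frame b) u v = (\<Sum>c\<in>UNIV. u $ c * (\<Sum>d\<in>UNIV. v $ d * R a b c d))"
  by (subst Rform_exp3) (simp add: RF4)

lemma scalar_curv_Rform: "scalar_curv R = (\<Sum>a\<in>UNIV. \<Sum>b\<in>UNIV. Rform R (frame a) (frame b) (frame b) (frame a))"
  by (simp add: scalar_curv_def Rform_frames)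

context
  fixes J :: "real^'d::finite \<Rightarrow> real^'d"
  assumes H: "hermitian_structure J"
begin

lemma Tt_expl: "Tt J a b c d = frame a $ d * frame b $ c - frame a $ c * frame b $ d
   + J (frame a) $ d * J (frame b) $ c - J (frame a) $ c * J (frame b) $ d
   - 2 * J (frame a) $ b * J (frame c) $ d"
  unfolding Tt_def Tf_def by (simp add: inner_frame_right)

lemma scalar_Tt: "scalar_curv (Tt J) = real CARD('d) * (real CARD('d) + 2)"
proof -
  have t: "Tt J a i i a = 1 - (if a = i then 1 else 0) + 3 * (J (frame a) $ i)^2" for a i
  proof -
    have "J (frame i) $ a = - (J (frame a) $ i)" using herm_col[OF H] by blast
    moreover have "J (frame a) $ a = 0" using herm_col[OF H, of a a] by simp
    ultimately show ?thesis unfolding Tt_expl by (simp add: frame_nth power2_eq_square)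
  qed
  have r: "(\<Sum>i\<in>UNIV. (J (frame a) $ i)^2) = 1" for a
    using herm_rows[OF H, of a a] by (simp add: power2_eq_square)
  have "scalar_curv (Tt J) = (\<Sum>a\<in>UNIV. \<Sum>i\<in>UNIV. 1 - (if a = i then 1 else 0) + 3 * (J (frame a) $ i)^2)"
    unfolding scalar_curv_def t ..
  also have "\<dots> = (\<Sum>a::'d\<in>UNIV. real CARD('d) - 1 + 3)"
    by (simp add: sum.distrib sum_subtractf sum_distrib_left[symmetric] r)
  also have "\<dots> = real CARD('d) * (real CARD('d) + 2)" by (simp add: algebra_simps)
  finally show ?thesis .
qed


lemma RF4J: "Rform R (frame a) (frame b) (frame c) (J (frame c)) = (\<Sum>d\<in>UNIV. J (frame c) $ d * R a b c d)"
  by (rule RF4)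

lemma inner_RT_ab:
  "(\<Sum>c\<in>UNIV. \<Sum>d\<in>UNIV. R a b c d * Tt J a b c d) =
     Rform R (frame a) (frame b) (frame b) (frame a) - Rform R (frame a) (frame b) (frame a) (frame b)
   + Rform R (frame a) (frame b) (J (frame b)) (J (frame a))
   - Rform R (frame a) (frame b) (J (frame a)) (J (frame b))
   - 2 * J (frame a) $ b * (\<Sum>c\<in>UNIV. Rform R (frame a) (frame b) (frame c) (J (frame c)))"
  unfolding RF4J unfolding RF34 Tt_expl
  by (simp add: sum_distrib_left sum_subtractf sum.distrib algebra_simps)

end



lemma sum_delta_mult: fixes k :: "'d::finite" shows "(\<Sum>l\<in>UNIV. (if k = l then 1 else 0) * g l) = (g k :: real)"
  by (subst sum.cong[OF refl, of _ _ "\<lambda>l. if l = k then g k else 0"]) auto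

lemma inner_RT:
  assumes K: "kaehler_curvature R J"
  shows "(\<Sum>a\<in>UNIV. \<Sum>b\<in>UNIV. \<Sum>c\<in>UNIV. \<Sum>d\<in>UNIV. R a b c d * Tt J a b c d) = 8 * scalar_curv R"
proof -
  have H: "hermitian_structure J" by (rule kc_herm[OF K])
  have C: "curvature_tensor R" by (rule kc_curv[OF K])
  let ?e = "frame :: 'd \<Rightarrow> real^'d"
  define \<tau> where "\<tau> = scalar_curv R"
  have t1: "(\<Sum>a\<in>UNIV. \<Sum>b\<in>UNIV. Rform R (?e a) (?e b) (?e b) (?e a)) = \<tau>"
    unfolding \<tau>_def scalar_curv_Rform ..
  have t2: "(\<Sum>a\<in>UNIV. \<Sum>b\<in>UNIV. Rform R (?e a) (?e b) (?e a) (?e b)) = - \<tau>"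
  proof -
    have "Rform R (?e a) (?e b) (?e a) (?e b) = - Rform R (?e a) (?e b) (?e b) (?e a)" for a b
      by (rule Rform_skew34[OF C])
    then show ?thesis using t1 by (simp only: sum_negf)
  qed
  have t3: "Rform R (?e a) (?e b) (J (?e b)) (J (?e a)) = Rform R (?e a) (?e b) (?e b) (?e a)" for a b
    by (rule kc_K1[OF K])
  have t4: "Rform R (?e a) (?e b) (J (?e a)) (J (?e b)) = Rform R (?e a) (?e b) (?e a) (?e b)" for a b
    by (rule kc_K1[OF K])
  define S where "S = (\<Sum>a\<in>UNIV. \<Sum>c\<in>UNIV. Rform R (?e a) (J (?e a)) (?e c) (J (?e c)))"
  have t5a: "(\<Sum>b\<in>UNIV. J (?e a) $ b * (\<Sum>c\<in>UNIV. Rform R (?e a) (?e b) (?e c) (J (?e c))))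
     = (\<Sum>c\<in>UNIV. Rform R (?e a) (J (?e a)) (?e c) (J (?e c)))" for a
  proof -
    have "(\<Sum>c\<in>UNIV. Rform R (?e a) (J (?e a)) (?e c) (J (?e c)))
        = (\<Sum>c\<in>UNIV. \<Sum>b\<in>UNIV. J (?e a) $ b * Rform R (?e a) (?e b) (?e c) (J (?e c)))"
      by (simp only: Rform_exp2[of R "?e a" "J (?e a)"])
    also have "\<dots> = (\<Sum>b\<in>UNIV. \<Sum>c\<in>UNIV. J (?e a) $ b * Rform R (?e a) (?e b) (?e c) (J (?e c)))"
      by (rule sum.swap)
    also have "\<dots> = (\<Sum>b\<in>UNIV. J (?e a) $ b * (\<Sum>c\<in>UNIV. Rform R (?e a) (?e b) (?e c) (J (?e c))))"
      by (simp only: sum_distrib_left)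
    finally show ?thesis by simp
  qed
  have t5: "(\<Sum>a\<in>UNIV. \<Sum>b\<in>UNIV. J (?e a) $ b * (\<Sum>c\<in>UNIV. Rform R (?e a) (?e b) (?e c) (J (?e c)))) = S"
    unfolding S_def t5a ..
  have b: "Rform R x (J x) z (J z) = - Rform R (J x) z x (J z) - Rform R z x (J x) (J z)" for x z
    using Rform_bianchi[OF C, of x "J x" z "J z"] by linarith
  have b2: "Rform R z x (J x) (J z) = Rform R z x x z" for x z by (rule kc_K1[OF K])
  have b3: "Rform R (J x) z x (J z) = - Rform R (J x) z (J x) z" for x z
    using kc_K2[OF K, of "J x" z x z] by simp
  have tr: "(\<Sum>a\<in>UNIV. Rform R (J (?e a)) z (J (?e a)) z) = (\<Sum>k\<in>UNIV. Rform R (?e k) z (?e k) z)" for z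
  proof -
    have e: "Rform R (J (?e a)) z (J (?e a)) z = (\<Sum>k\<in>UNIV. \<Sum>l\<in>UNIV. J (?e a) $ k * J (?e a) $ l * Rform R (?e k) z (?e l) z)" for a
      apply (subst Rform_exp1)
      apply (simp only: Rform_exp3[of R "?e k" z "J (?e a)" z for k])
      by (simp add: sum_distrib_left mult_ac)
    have "(\<Sum>a\<in>UNIV. Rform R (J (?e a)) z (J (?e a)) z)
        = (\<Sum>a\<in>UNIV. \<Sum>k\<in>UNIV. \<Sum>l\<in>UNIV. J (?e a) $ k * J (?e a) $ l * Rform R (?e k) z (?e l) z)"
      by (simp only: e)
    also have "\<dots> = (\<Sum>k\<in>UNIV. \<Sum>a\<in>UNIV. \<Sum>l\<in>UNIV. J (?e a) $ k * J (?e a) $ l * Rform R (?e k) z (?e l) z)"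
      by (rule sum.swap)
    also have "\<dots> = (\<Sum>k\<in>UNIV. \<Sum>l\<in>UNIV. \<Sum>a\<in>UNIV. J (?e a) $ k * J (?e a) $ l * Rform R (?e k) z (?e l) z)"
      by (rule sum.cong[OF refl], rule sum.swap)
    also have "\<dots> = (\<Sum>k\<in>UNIV. \<Sum>l\<in>UNIV. (\<Sum>a\<in>UNIV. J (?e a) $ k * J (?e a) $ l) * Rform R (?e k) z (?e l) z)"
      by (simp only: sum_distrib_right)
    also have "\<dots> = (\<Sum>k\<in>UNIV. \<Sum>l\<in>UNIV. (if k = l then 1 else 0) * Rform R (?e k) z (?e l) z)"
      by (simp only: herm_cols[OF H])
    also have "\<dots> = (\<Sum>k\<in>UNIV. Rform R (?e k) z (?e k) z)"
      by (simp add: sum_delta_mult)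
    finally show ?thesis .
  qed
  have S1: "(\<Sum>a\<in>UNIV. \<Sum>c\<in>UNIV. Rform R (?e c) (?e a) (J (?e a)) (J (?e c))) = \<tau>"
  proof -
    have "(\<Sum>a\<in>UNIV. \<Sum>c\<in>UNIV. Rform R (?e c) (?e a) (J (?e a)) (J (?e c)))
        = (\<Sum>a\<in>UNIV. \<Sum>c\<in>UNIV. Rform R (?e c) (?e a) (?e a) (?e c))" by (simp only: b2)
    also have "\<dots> = (\<Sum>c\<in>UNIV. \<Sum>a\<in>UNIV. Rform R (?e c) (?e a) (?e a) (?e c))" by (rule sum.swap)
    also have "\<dots> = \<tau>" by (rule t1)
    finally show ?thesis .
  qed
  have S2: "(\<Sum>a\<in>UNIV. \<Sum>c\<in>UNIV. Rform R (J (?e a)) (?e c) (?e a) (J (?e c))) = \<tau>"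
  proof -
    have "(\<Sum>a\<in>UNIV. \<Sum>c\<in>UNIV. Rform R (J (?e a)) (?e c) (?e a) (J (?e c)))
        = (\<Sum>a\<in>UNIV. \<Sum>c\<in>UNIV. - Rform R (J (?e a)) (?e c) (J (?e a)) (?e c))"
      by (simp only: b3)
    also have "\<dots> = (\<Sum>c\<in>UNIV. \<Sum>a\<in>UNIV. - Rform R (J (?e a)) (?e c) (J (?e a)) (?e c))"
      by (rule sum.swap)
    also have "\<dots> = - (\<Sum>c\<in>UNIV. \<Sum>a\<in>UNIV. Rform R (J (?e a)) (?e c) (J (?e a)) (?e c))"
      by (simp add: sum_negf)
    also have "\<dots> = - (\<Sum>c\<in>UNIV. \<Sum>k\<in>UNIV. Rform R (?e k) (?e c) (?e k) (?e c))"
      by (simp only: tr)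
    also have "\<dots> = - (\<Sum>k\<in>UNIV. \<Sum>c\<in>UNIV. Rform R (?e k) (?e c) (?e k) (?e c))"
      by (subst sum.swap) (rule refl)
    also have "\<dots> = \<tau>" using t2 by simp
    finally show ?thesis .
  qed
  have Sv: "S = - 2 * \<tau>"
  proof -
    have "S = (\<Sum>a\<in>UNIV. \<Sum>c\<in>UNIV. - Rform R (J (?e a)) (?e c) (?e a) (J (?e c))
                  - Rform R (?e c) (?e a) (J (?e a)) (J (?e c)))"
      unfolding S_def using b by simp
    also have "\<dots> = - 2 * \<tau>" using S1 S2 by (simp add: sum_subtractf sum_negf)
    finally show ?thesis .
  qed
  have "(\<Sum>a\<in>UNIV. \<Sum>b\<in>UNIV. \<Sum>c\<in>UNIV. \<Sum>d\<in>UNIV. R a b c d * Tt J a b c d)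
     = (\<Sum>a\<in>UNIV. \<Sum>b\<in>UNIV. 2 * Rform R (?e a) (?e b) (?e b) (?e a) - 2 * Rform R (?e a) (?e b) (?e a) (?e b)
         - 2 * (J (?e a) $ b * (\<Sum>c\<in>UNIV. Rform R (?e a) (?e b) (?e c) (J (?e c)))))"
    by (simp add: inner_RT_ab[OF H] t3 t4 mult.assoc)
  also have "\<dots> = 2 * \<tau> - 2 * (- \<tau>) - 2 * S"
    by (simp add: sum_subtractf sum_distrib_left[symmetric] t1 t2 t5)
  finally show ?thesis using Sv \<tau>_def by simp
qed




lemma sum4_reorder1:
  "(\<Sum>i\<in>A. \<Sum>j\<in>B. \<Sum>a\<in>C. \<Sum>b\<in>D. f i j a b) = (\<Sum>a\<in>C. \<Sum>i\<in>A. \<Sum>j\<in>B. \<Sum>b\<in>D. f i j a b)"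
proof -
  have "(\<Sum>i\<in>A. \<Sum>j\<in>B. \<Sum>a\<in>C. \<Sum>b\<in>D. f i j a b) = (\<Sum>i\<in>A. \<Sum>a\<in>C. \<Sum>j\<in>B. \<Sum>b\<in>D. f i j a b)"
    by (rule sum.cong[OF refl], rule sum.swap)
  also have "\<dots> = (\<Sum>a\<in>C. \<Sum>i\<in>A. \<Sum>j\<in>B. \<Sum>b\<in>D. f i j a b)" by (rule sum.swap)
  finally show ?thesis .
qed

lemma sum4_reorder2:
  "(\<Sum>i\<in>A. \<Sum>j\<in>B. \<Sum>a\<in>C. \<Sum>b\<in>D. f i j a b) = (\<Sum>a\<in>C. \<Sum>b\<in>D. \<Sum>i\<in>A. \<Sum>j\<in>B. f i j a b)"
proof -
  have "(\<Sum>i\<in>A. \<Sum>j\<in>B. \<Sum>a\<in>C. \<Sum>b\<in>D. f i j a b) = (\<Sum>a\<in>C. \<Sum>i\<in>A. \<Sum>j\<in>B. \<Sum>b\<in>D. f i j a b)"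
    by (rule sum4_reorder1)
  also have "\<dots> = (\<Sum>a\<in>C. \<Sum>i\<in>A. \<Sum>b\<in>D. \<Sum>j\<in>B. f i j a b)"
    by (rule sum.cong[OF refl], rule sum.cong[OF refl], rule sum.swap)
  also have "\<dots> = (\<Sum>a\<in>C. \<Sum>b\<in>D. \<Sum>i\<in>A. \<Sum>j\<in>B. f i j a b)"
    by (rule sum.cong[OF refl], rule sum.swap)
  finally show ?thesis .
qed

lemma sum3_cycle:
  "(\<Sum>i\<in>A. \<Sum>j\<in>A. \<Sum>b\<in>A. f i j b) = (\<Sum>i\<in>A. \<Sum>j\<in>A. \<Sum>b\<in>A. f j b i)"
proof -
  have "(\<Sum>i\<in>A. \<Sum>j\<in>A. \<Sum>b\<in>A. f j b i) = (\<Sum>j\<in>A. \<Sum>i\<in>A. \<Sum>b\<in>A. f j b i)" by (rule sum.swap)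
  also have "\<dots> = (\<Sum>j\<in>A. \<Sum>b\<in>A. \<Sum>i\<in>A. f j b i)" by (rule sum.cong[OF refl], rule sum.swap)
  finally show ?thesis by simp
qed

lemma curv_bianchi2:
  assumes C: "curvature_tensor R"
  shows "R a i j b + R a j b i + R a b i j = 0"
proof -
  note s1 = curv_skew12[OF C] and s2 = curv_skew34[OF C] and b = curv_bianchi[OF C] and p = curv_pair[OF C]
  show ?thesis
    using b[of j b i a] p[of a i j b] p[of a j b i] p[of a b i j] s2[of j b a i] s2[of b i a j] s2[of i j a b]
    by linarith
qed

definition normsq :: "('d::finite \<Rightarrow> 'd \<Rightarrow> 'd \<Rightarrow> 'd \<Rightarrow> real) \<Rightarrow> real" where
  "normsq R = (\<Sum>a\<in>UNIV. \<Sum>i\<in>UNIV. \<Sum>j\<in>UNIV. \<Sum>b\<in>UNIV. (R a i j b)^2)"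

lemma X_lemma:
  assumes C: "curvature_tensor R"
  shows "(\<Sum>a\<in>UNIV. \<Sum>i\<in>UNIV. \<Sum>j\<in>UNIV. \<Sum>b\<in>UNIV. R a i j b * R a j i b) = normsq R / 2"
proof -
  define X where "X = (\<Sum>a\<in>UNIV. \<Sum>i\<in>UNIV. \<Sum>j\<in>UNIV. \<Sum>b\<in>UNIV. R a i j b * R a j i b)"
  have e0: "R a i j b * R a i j b + R a i j b * R a j b i + R a i j b * R a b i j = 0" for a i j b
    using curv_bianchi2[OF C, of a i j b] by (metis distrib_left mult_zero_right)
  have e1: "R a i j b * R a j b i = - (R a i j b * R a j i b)" for a i j b
    using curv_skew34[OF C, of a j b i] by simp
  have c: "(\<Sum>i\<in>UNIV. \<Sum>j\<in>UNIV. \<Sum>b\<in>UNIV. R a i j b * R a b i j)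
      = (\<Sum>i\<in>UNIV. \<Sum>j\<in>UNIV. \<Sum>b\<in>UNIV. R a j b i * R a i j b)" for a
    by (rule sum3_cycle)
  have "0 = (\<Sum>a\<in>UNIV. \<Sum>i\<in>UNIV. \<Sum>j\<in>UNIV. \<Sum>b\<in>UNIV.
      R a i j b * R a i j b + R a i j b * R a j b i + R a i j b * R a b i j)"
    by (simp add: e0)
  also have "\<dots> = normsq R + (\<Sum>a\<in>UNIV. \<Sum>i\<in>UNIV. \<Sum>j\<in>UNIV. \<Sum>b\<in>UNIV. R a i j b * R a j b i)
      + (\<Sum>a\<in>UNIV. \<Sum>i\<in>UNIV. \<Sum>j\<in>UNIV. \<Sum>b\<in>UNIV. R a i j b * R a b i j)"
    by (simp add: sum.distrib normsq_def power2_eq_square)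
  also have "\<dots> = normsq R - X - X"
    unfolding c X_def by (simp add: e1 mult.commute sum_negf)
  finally show ?thesis unfolding X_def[symmetric] by simp
qed



lemma norm_frame: "norm (frame a :: real^'d::finite) = 1"
  by (simp add: frame_def)

lemma inner_frames_pm:
  "(frame i + frame j) \<bullet> (frame i + frame j) = 2 + 2 * (if i = j then 1 else 0)"
  "(frame i - frame j) \<bullet> (frame i - frame j) = 2 - 2 * (if i = j then 1 else 0)"
  by (auto simp: inner_add_left inner_add_right inner_diff_left inner_diff_right inner_frame)

lemma norm4: "norm (x::real^'d::finite) ^ 4 = (x \<bullet> x)^2"
  by (simp add: power2_norm_eq_inner[symmetric] power_mult[symmetric])

lemma ric_lemma:
  assumes C: "curvature_tensor R"
    and L: "\<forall>x::real^'d::finite. (\<Sum>a\<in>UNIV. Rform R (frame a) x x (frame a)) = L1 * norm x ^ 2"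
  shows "(\<Sum>a\<in>UNIV. R a i j a) = (if i = j then L1 else 0)"
proof -
  define \<rho> where "\<rho> i j = (\<Sum>a\<in>UNIV. R a i j a)" for i j
  have sym: "\<rho> j i = \<rho> i j" for i j
  proof -
    have "R a j i a = R a i j a" for a
      using curv_pair[OF C, of i a a j] curv_skew12[OF C, of i a a j] curv_skew34[OF C, of a i a j] by simp
    then show ?thesis unfolding \<rho>_def by simp
  qed
  have r: "(\<Sum>a\<in>UNIV. Rform R (frame a) (frame i) (frame j) (frame a)) = \<rho> i j" for i j
    unfolding \<rho>_def by (simp add: Rform_frames)
  have diag: "\<rho> i i = L1" for i
    using L[rule_format, of "frame i"] r[of i i] by (simp add: norm_frame)
  have "L1 * norm (frame i + frame j) ^ 2 = (\<Sum>a\<in>UNIV. Rform R (frame a) (frame i + frame j) (frame i + frame j) (frame a))"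
    using L by simp
  also have "\<dots> = \<rho> i i + \<rho> i j + \<rho> j i + \<rho> j j"
    by (simp add: Rform_add2 Rform_add3 sum.distrib r)
  finally have "L1 * (2 + 2 * (if i = j then 1 else 0)) = 2 * L1 + 2 * \<rho> i j"
    using diag sym inner_frames_pm(1)[of i j] by (simp add: power2_norm_eq_inner)
  then have "\<rho> i j = (if i = j then L1 else 0)" by (simp split: if_splits)
  then show ?thesis unfolding \<rho>_def .
qed


definition Pq :: "('d::finite \<Rightarrow> 'd \<Rightarrow> 'd \<Rightarrow> 'd \<Rightarrow> real) \<Rightarrow> real^'d \<Rightarrow> real" where
  "Pq R x = (\<Sum>a\<in>UNIV. \<Sum>b\<in>UNIV. Rform R (frame a) x x (frame b) * Rform R (frame b) x x (frame a))"

lemma Pq_polar: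
  "Pq R (u + v) + Pq R (u - v) - 2 * Pq R u - 2 * Pq R v =
   2 * (\<Sum>a\<in>UNIV. \<Sum>b\<in>UNIV.
      Rform R (frame a) u u (frame b) * Rform R (frame b) v v (frame a)
    + Rform R (frame a) v v (frame b) * Rform R (frame b) u u (frame a)
    + (Rform R (frame a) u v (frame b) + Rform R (frame a) v u (frame b)) *
      (Rform R (frame b) u v (frame a) + Rform R (frame b) v u (frame a)))"
proof -
  have "Pq R (u + v) + Pq R (u - v) - 2 * Pq R u - 2 * Pq R v =
    (\<Sum>a\<in>UNIV. \<Sum>b\<in>UNIV.
       Rform R (frame a) (u+v) (u+v) (frame b) * Rform R (frame b) (u+v) (u+v) (frame a)
     + Rform R (frame a) (u-v) (u-v) (frame b) * Rform R (frame b) (u-v) (u-v) (frame a)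
     - 2 * (Rform R (frame a) u u (frame b) * Rform R (frame b) u u (frame a))
     - 2 * (Rform R (frame a) v v (frame b) * Rform R (frame b) v v (frame a)))"
    unfolding Pq_def by (simp add: sum.distrib sum_subtractf sum_distrib_left)
  also have "\<dots> = 2 * (\<Sum>a\<in>UNIV. \<Sum>b\<in>UNIV.
      Rform R (frame a) u u (frame b) * Rform R (frame b) v v (frame a)
    + Rform R (frame a) v v (frame b) * Rform R (frame b) u u (frame a)
    + (Rform R (frame a) u v (frame b) + Rform R (frame a) v u (frame b)) *
      (Rform R (frame b) u v (frame a) + Rform R (frame b) v u (frame a)))"
    unfolding sum_distrib_left
    by (rule sum.cong[OF refl], rule sum.cong[OF refl]) (simp add: Rform_lin algebra_simps)
  finally show ?thesis .
qed

lemma quartic_lemma: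
  assumes C: "curvature_tensor R"
    and Ric: "\<And>i j. (\<Sum>a\<in>UNIV. R a i j a) = (if i = j then L1 else 0)"
    and Q: "\<forall>x::real^'d::finite. Pq R x = L2 * norm x ^ 4"
  shows "2 * real CARD('d) * L1^2 + 3 * normsq R = L2 * (2 * real CARD('d)^2 + 4 * real CARD('d))"
proof -
  define F where "F i j a b = R a i i b * R b j j a + R a j j b * R b i i a
     + (R a i j b + R a j i b) * (R b i j a + R b j i a)" for i j a b
  have q2: "(\<Sum>a\<in>UNIV. \<Sum>b\<in>UNIV. F i j a b) = L2 * (2 + 4 * (if i = j then 1 else 0))" for i j
  proof -
    have "2 * (\<Sum>a\<in>UNIV. \<Sum>b\<in>UNIV. F i j a b) =
        Pq R (frame i + frame j) + Pq R (frame i - frame j) - 2 * Pq R (frame i) - 2 * Pq R (frame j)"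
      unfolding Pq_polar F_def by (simp add: Rform_frames)
    also have "\<dots> = L2 * ((2 + 2 * (if i = j then 1 else 0))^2 + (2 - 2 * (if i = j then 1 else 0))^2 - 4)"
    proof -
      have "Pq R (frame i + frame j) = L2 * (2 + 2 * (if i = j then 1 else 0))^2"
        using Q norm4[of "frame i + frame j"] inner_frames_pm(1)[of i j] by simp
      moreover have "Pq R (frame i - frame j) = L2 * (2 - 2 * (if i = j then 1 else 0))^2"
        using Q norm4[of "frame i - frame j"] inner_frames_pm(2)[of i j] by simp
      moreover have "Pq R (frame k) = L2" for k
        using Q norm_frame[of k] by simp
      ultimately show ?thesis by (simp add: algebra_simps)
    qed
    also have "\<dots> = 2 * (L2 * (2 + 4 * (if i = j then 1 else 0)))" by (simp add: power2_eq_square)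
    finally show ?thesis by simp
  qed
  have q3: "(\<Sum>i\<in>UNIV. \<Sum>j\<in>UNIV. \<Sum>a\<in>UNIV. \<Sum>b\<in>UNIV. F i j a b) = L2 * (2 * real CARD('d)^2 + 4 * real CARD('d))"
    by (simp add: q2 sum.distrib sum_distrib_left[symmetric] power2_eq_square algebra_simps)
  have sig: "(\<Sum>i\<in>UNIV. R a i i b) = (if a = b then L1 else 0)" for a b
  proof -
    have "R a i i b = R i b a i" for i using curv_pair[OF C, of i b a i] by simp
    then have "(\<Sum>i\<in>UNIV. R a i i b) = (\<Sum>i\<in>UNIV. R i b a i)" by simp
    then show ?thesis using Ric[of b a] by auto
  qed
  have dd: "(if a = b then L1 else 0) * (if b = a then L1 else 0) = (if b = a then L1 * L1 else 0)" for a b :: 'd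
    by auto
  have A1: "(\<Sum>i\<in>UNIV. \<Sum>j\<in>UNIV. \<Sum>a\<in>UNIV. \<Sum>b\<in>UNIV. R a i i b * R b j j a) = real CARD('d) * L1^2"
  proof -
    have "(\<Sum>i\<in>UNIV. \<Sum>j\<in>UNIV. \<Sum>a\<in>UNIV. \<Sum>b\<in>UNIV. R a i i b * R b j j a)
       = (\<Sum>a\<in>UNIV. \<Sum>b\<in>UNIV. \<Sum>i\<in>UNIV. \<Sum>j\<in>UNIV. R a i i b * R b j j a)" by (rule sum4_reorder2)
    also have "\<dots> = (\<Sum>a\<in>UNIV. \<Sum>b::'d\<in>UNIV. (\<Sum>i\<in>UNIV. R a i i b) * (\<Sum>j\<in>UNIV. R b j j a))"
      by (simp add: sum_product)
    also have "\<dots> = real CARD('d) * L1^2" by (simp add: sig power2_eq_square dd)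
    finally show ?thesis .
  qed
  have A2: "(\<Sum>i\<in>UNIV. \<Sum>j\<in>UNIV. \<Sum>a\<in>UNIV. \<Sum>b\<in>UNIV. R a j j b * R b i i a) = real CARD('d) * L1^2"
  proof -
    have "(\<Sum>i\<in>UNIV. \<Sum>j\<in>UNIV. \<Sum>a\<in>UNIV. \<Sum>b\<in>UNIV. R a j j b * R b i i a)
       = (\<Sum>a\<in>UNIV. \<Sum>b\<in>UNIV. \<Sum>i\<in>UNIV. \<Sum>j\<in>UNIV. R a j j b * R b i i a)" by (rule sum4_reorder2)
    also have "\<dots> = (\<Sum>a\<in>UNIV. \<Sum>b\<in>UNIV. \<Sum>j\<in>UNIV. \<Sum>i\<in>UNIV. R a j j b * R b i i a)"
      by (rule sum.cong[OF refl], rule sum.cong[OF refl], rule sum.swap)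
    also have "\<dots> = (\<Sum>a\<in>UNIV. \<Sum>b::'d\<in>UNIV. (\<Sum>j\<in>UNIV. R a j j b) * (\<Sum>i\<in>UNIV. R b i i a))"
      by (simp add: sum_product)
    also have "\<dots> = real CARD('d) * L1^2" by (simp add: sig power2_eq_square dd)
    finally show ?thesis .
  qed
  have p1: "R b i j a = R a j i b" for a b i j
    using curv_pair[OF C, of j a b i] curv_skew12[OF C, of j a b i] curv_skew34[OF C, of a j b i] by simp
  have pt: "(R a i j b + R a j i b) * (R b i j a + R b j i a) = (R a i j b)^2 + (R a j i b)^2 + 2 * (R a i j b * R a j i b)" for a i j b
    using p1[of b i j a] p1[of b j i a] by (simp add: power2_eq_square algebra_simps)
  have A3: "(\<Sum>i\<in>UNIV. \<Sum>j\<in>UNIV. \<Sum>a\<in>UNIV. \<Sum>b\<in>UNIV.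
       (R a i j b + R a j i b) * (R b i j a + R b j i a)) = 3 * normsq R"
  proof -
    have "(\<Sum>i\<in>UNIV. \<Sum>j\<in>UNIV. \<Sum>a\<in>UNIV. \<Sum>b\<in>UNIV.
       (R a i j b + R a j i b) * (R b i j a + R b j i a))
      = (\<Sum>a\<in>UNIV. \<Sum>i\<in>UNIV. \<Sum>j\<in>UNIV. \<Sum>b\<in>UNIV.
       (R a i j b + R a j i b) * (R b i j a + R b j i a))" by (rule sum4_reorder1)
    also have "\<dots> = (\<Sum>a\<in>UNIV. \<Sum>i\<in>UNIV. \<Sum>j\<in>UNIV. \<Sum>b\<in>UNIV.
       (R a i j b)^2 + (R a j i b)^2 + 2 * (R a i j b * R a j i b))"
      by (simp add: pt)
    also have "\<dots> = normsq R + (\<Sum>a\<in>UNIV. \<Sum>i\<in>UNIV. \<Sum>j\<in>UNIV. \<Sum>b\<in>UNIV. (R a j i b)^2)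
        + 2 * (\<Sum>a\<in>UNIV. \<Sum>i\<in>UNIV. \<Sum>j\<in>UNIV. \<Sum>b\<in>UNIV. R a i j b * R a j i b)"
      by (simp add: normsq_def sum.distrib sum_distrib_left)
    also have "(\<Sum>a\<in>UNIV. \<Sum>i\<in>UNIV. \<Sum>j\<in>UNIV. \<Sum>b\<in>UNIV. (R a j i b)^2) = normsq R"
      unfolding normsq_def by (rule sum.cong[OF refl], rule sum.swap)
    finally show ?thesis using X_lemma[OF C] by simp
  qed
  have "(\<Sum>i\<in>UNIV. \<Sum>j\<in>UNIV. \<Sum>a\<in>UNIV. \<Sum>b\<in>UNIV. F i j a b) = 2 * real CARD('d) * L1^2 + 3 * normsq R"
    unfolding F_def by (simp add: sum.distrib A1 A2 A3)
  then show ?thesis using q3 by simp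
qed



lemma kaehler_holo_zero:
  assumes K: "kaehler_curvature D J"
    and Z: "\<And>x. Rform D x (J x) (J x) x = 0"
  shows "D a b c d = 0"
proof -
  have H: "hermitian_structure J" by (rule kc_herm[OF K])
  have C: "curvature_tensor D" by (rule kc_curv[OF K])
  define F where "F = Rform D"
  note s12 = Rform_skew12[OF C, folded F_def] and s34 = Rform_skew34[OF C, folded F_def]
    and pr = Rform_pair[OF C, folded F_def] and bi = Rform_bianchi[OF C, folded F_def]
    and k1 = kc_K1[OF K, folded F_def] and k2 = kc_K2[OF K, folded F_def]
    and k3 = kc_K3[OF K, folded F_def]
  note lin = Rform_lin[of D, folded F_def]
  have JJ: "J (J x) = - x" for x by (rule herm_JJ[OF H])
  have Z': "F x (J x) (J x) x = 0" for x unfolding F_def by (rule Z)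
  have step1: "F x y y x + 3 * F x (J y) (J y) x = 0" for x y
  proof -
    have g1: "F x (J x) (J y) y = F x y y x + F x (J y) (J y) x"
    proof -
      have "F (J x) (J y) x y = - F x y y x" using k3[of x y x y] s34[of x y y x] by simp
      moreover have "F (J y) x (J x) y = - F x (J y) (J y) x"
        using k2[of "J y" x x y] s34[of "J y" x "J y" x] s12[of "J y" x "J y" x] by simp
      ultimately show ?thesis using bi[of x "J x" "J y" y] by linarith
    qed
    have g6: "F y (J y) (J x) x = F x (J x) (J y) y"
      using pr[of "J x" x y "J y"] s12[of x "J x" y "J y"] s34[of x "J x" y "J y"] by simp
    have g4: "F y (J x) (J x) y = F x (J y) (J y) x"
      using k3[of y "J x" "J (J x)" "J y"] k1[of y "J x" "J x" y] JJ[of x] pr[of x "J y" "J y" x]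
        lin by simp
    have g2: "F x (J y) (J x) y = F x (J y) (J y) x"
      using k2[of x "J y" x y] s34[of x "J y" "J y" x] by simp
    have g5: "F y (J x) (J y) x = F x (J y) (J y) x"
      using k2[of y "J x" y x] s34[of y "J x" "J x" y] g4 by simp
    have e1: "F (x + y) (J (x + y)) (J (x + y)) (x + y) = 0" by (rule Z')
    have e2: "F (x - y) (J (x - y)) (J (x - y)) (x - y) = 0" by (rule Z')
    have e3: "F x (J x) (J x) x = 0" "F y (J y) (J y) y = 0" by (rule Z')+
    show ?thesis
      using e1 e2 e3 g1 g2 g4 g5 g6
      by (simp add: herm_add[OF H] herm_diff[OF H] lin)
  qed
  have Q0: "F x y y x = 0" for x y
  proof -
    have "F x (J y) (J y) x + 3 * F x (J (J y)) (J (J y)) x = 0" by (rule step1)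
    then have "F x (J y) (J y) x + 3 * F x y y x = 0" by (simp add: JJ lin)
    then show ?thesis using step1[of x y] by linarith
  qed
  have A0: "F x y z x = 0" for x y z
  proof -
    have "F x (y + z) (y + z) x = 0" by (rule Q0)
    then have "F x y z x + F x z y x = 0" using Q0[of x y] Q0[of x z] by (simp add: lin)
    moreover have "F x z y x = F x y z x"
      using pr[of y x x z] s12[of x y z x] s34[of y x z x] by simp
    ultimately show ?thesis by simp
  qed
  have A: "F x y z w = - F w y z x" for x y z w
  proof -
    have "F (x + w) y z (x + w) = 0" by (rule A0)
    then show ?thesis using A0[of x y z] A0[of w y z] by (simp add: lin)
  qed
  have cyc: "F x y z w = F x w y z" for x y z w
    using A[of x y z w] s12[of w y z x] A[of y w z x] s34[of x w z y] by simp
  have cycD: "D a b c d = D a d b c" for a b c d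
    using cyc[of "frame a" "frame b" "frame c" "frame d"] unfolding F_def Rform_frames .
  show ?thesis
    using curv_bianchi2[OF C, of a b c d] cycD[of a b c d] cycD[of a c d b] by linarith
qed



lemma normsq_nonneg: "normsq D \<ge> 0"
  unfolding normsq_def by (intro sum_nonneg) auto

lemma normsq_zero: "normsq D = 0 \<Longrightarrow> D a b c d = 0"
  unfolding normsq_def by (simp add: sum_nonneg_eq_0_iff sum_nonneg)

lemma normsq_diff: "normsq (\<lambda>a b c d. R a b c d - k * T a b c d) =
   normsq R - 2 * k * (\<Sum>a\<in>UNIV. \<Sum>b\<in>UNIV. \<Sum>c\<in>UNIV. \<Sum>d\<in>UNIV. R a b c d * T a b c d)
   + k^2 * (\<Sum>a\<in>UNIV. \<Sum>b\<in>UNIV. \<Sum>c\<in>UNIV. \<Sum>d\<in>UNIV. T a b c d * T a b c d)"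
  unfolding normsq_def
  by (simp add: power2_diff power2_eq_square sum.distrib sum_subtractf sum_distrib_left algebra_simps)

lemma scalar_from_ric:
  assumes Ric: "\<And>i j. (\<Sum>a\<in>UNIV. R a i j a) = (if i = j then L1 else 0)"
  shows "scalar_curv (R::'d::finite \<Rightarrow> _) = real CARD('d) * L1"
proof -
  have "scalar_curv R = (\<Sum>i\<in>UNIV. \<Sum>a\<in>UNIV. R a i i a)" unfolding scalar_curv_def by (rule sum.swap)
  also have "\<dots> = real CARD('d) * L1" by (simp add: Ric)
  finally show ?thesis .
qed

lemma point_identity:
  fixes R :: "'d::finite \<Rightarrow> 'd \<Rightarrow> 'd \<Rightarrow> 'd \<Rightarrow> real"
  assumes K: "kaehler_curvature R J"
    and dim: "CARD('d) = 2 * n"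
    and L: "\<forall>x::real^'d. (\<Sum>a\<in>UNIV. Rform R (frame a) x x (frame a)) = L1 * norm x ^ 2"
    and Q: "\<forall>x::real^'d. (\<Sum>a\<in>UNIV. \<Sum>b\<in>UNIV. Rform R (frame a) x x (frame b) *
                                Rform R (frame b) x x (frame a)) = L2 * norm x ^ 4"
  shows "L1\<^sup>2 - 2 * (real n + 1)\<^sup>2 / (real n + 7) * L2 =
     - (3 * (2 * real n + 2) / (4 * real n * (2 * real n + 14))) *
       normsq (\<lambda>a b c d. R a b c d - scalar_curv R / (2 * real n * (2 * real n + 2)) * Tt J a b c d)"
proof -
  have H: "hermitian_structure J" by (rule kc_herm[OF K])
  have C: "curvature_tensor R" by (rule kc_curv[OF K])
  have npos: "real n > 0" using dim by (metis of_nat_0_less_iff zero_less_card_finite nat_0_less_mult_iff)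
  define m where "m = real CARD('d)"
  have m2: "m = 2 * real n" unfolding m_def dim by simp
  have Ric: "\<And>i j. (\<Sum>a\<in>UNIV. R a i j a) = (if i = j then L1 else 0)" by (rule ric_lemma[OF C L])
  have tau: "scalar_curv R = m * L1" unfolding m_def by (rule scalar_from_ric[of R L1]) (rule Ric)
  have quart: "2 * m * L1^2 + 3 * normsq R = L2 * (2 * m^2 + 4 * m)"
    unfolding m_def by (rule quartic_lemma[OF C Ric]) (use Q in \<open>simp add: Pq_def\<close>)
  have RT: "(\<Sum>a\<in>UNIV. \<Sum>b\<in>UNIV. \<Sum>c\<in>UNIV. \<Sum>d\<in>UNIV. R a b c d * Tt J a b c d) = 8 * (m * L1)"
    using inner_RT[OF K] tau by simp
  have TT: "(\<Sum>a\<in>UNIV. \<Sum>b\<in>UNIV. \<Sum>c\<in>UNIV. \<Sum>d\<in>UNIV. Tt J a b c d * Tt J a b c d) = 8 * (m * (m + 2))"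
    using inner_RT[OF Tt_kaehler[OF H]] scalar_Tt[OF H] unfolding m_def by simp
  define \<nu> where "\<nu> = scalar_curv R / (2 * real n * (2 * real n + 2))"
  have d1: "2 * real n * (2 * real n + 2) \<noteq> 0" "2 * real n + 2 \<noteq> 0" "real n \<noteq> 0" "real n + 7 \<noteq> 0"
    "2 * real n + 14 \<noteq> 0" using npos by auto
  have nu: "\<nu> = L1 / (m + 2)"
  proof -
    have "\<nu> = (2 * real n * L1) / (2 * real n * (2 * real n + 2))" unfolding \<nu>_def tau m2 ..
    also have "\<dots> = L1 / (2 * real n + 2)" using d1 by (simp add: field_simps)
    finally show ?thesis unfolding m2 .
  qed
  have ND: "normsq (\<lambda>a b c d. R a b c d - \<nu> * Tt J a b c d) = normsq R - 2 * \<nu> * (8 * (m * L1)) + \<nu>^2 * (8 * (m * (m + 2)))"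
    unfolding normsq_diff RT TT ..
  define a where "a = real n"
  define N where "N = normsq R"
  define NDv where "NDv = normsq (\<lambda>a b c d. R a b c d - \<nu> * Tt J a b c d)"
  have a0: "a > 0" "a + 1 \<noteq> 0" "a + 7 \<noteq> 0" "a \<noteq> 0" "2 * a + 2 \<noteq> 0" "2 * a + 14 \<noteq> 0"
    using npos unfolding a_def by auto
  have L2e: "L2 = (4 * a * L1^2 + 3 * N) / (8 * a * (a + 1))"
  proof -
    have q: "L2 * (8 * a * (a + 1)) = 4 * a * L1^2 + 3 * N"
      using quart unfolding m2 a_def[symmetric] N_def[symmetric] by (simp add: algebra_simps power2_eq_square)
    have "8 * a * (a + 1) \<noteq> 0" using a0 by simp
    then show ?thesis using q by (simp add: eq_divide_eq)
  qed
  have Ne: "N = NDv + 8 * a * L1^2 / (a + 1)"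
  proof -
    have "NDv = N - 2 * (L1 / (2 * a + 2)) * (8 * (2 * a * L1)) + (L1 / (2 * a + 2))^2 * (8 * (2 * a * (2 * a + 2)))"
    proof -
      have "NDv = N - 2 * \<nu> * (8 * (m * L1)) + \<nu>^2 * (8 * (m * (m + 2)))"
        unfolding NDv_def N_def by (rule ND)
      then show ?thesis unfolding nu m2 a_def .
    qed
    also have "\<dots> = N - 8 * a * L1^2 / (a + 1)"
    proof -
      define q where "q = 2 * a + 2"
      have q0: "q \<noteq> 0" unfolding q_def using a0 by simp
      have "N - 2 * (L1 / q) * (8 * (2 * a * L1)) + (L1 / q)^2 * (8 * (2 * a * q)) = N - 16 * a * L1^2 / q"
        using q0 by (simp add: field_simps power2_eq_square)
      also have "16 * a * L1^2 / q = 8 * a * L1^2 / (a + 1)"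
        unfolding q_def using a0 by (simp add: field_simps)
      finally show ?thesis unfolding q_def .
    qed
    finally show ?thesis by simp
  qed
  have goal: "L1\<^sup>2 - 2 * (a + 1)\<^sup>2 / (a + 7) * L2 = - (3 * (2 * a + 2) / (4 * a * (2 * a + 14))) * NDv"
  proof -
    define b where "b = a + 1"
    define c where "c = a + 7"
    have nz: "a \<noteq> 0" "b \<noteq> 0" "c \<noteq> 0" using a0 unfolding b_def c_def by auto
    have e1: "2 * a + 2 = 2 * b" "2 * a + 14 = 2 * c" unfolding b_def c_def by simp_all
    have "L1\<^sup>2 - 2 * b\<^sup>2 / c * ((4 * a * L1^2 + 3 * (NDv + 8 * a * L1^2 / b)) / (8 * a * b))
        = - (3 * (2 * b) / (4 * a * (2 * c))) * NDv"
      using nz by (simp add: field_simps power2_eq_square) (simp add: b_def c_def algebra_simps)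
    then show ?thesis unfolding L2e Ne e1 b_def c_def by simp
  qed
  show ?thesis using goal unfolding a_def NDv_def \<nu>_def by simp
qed



lemma Rform_tensor_scale: "Rform (\<lambda>a b c d. k * T a b c d) x y z w = k * Rform T x y z w"
  unfolding Rform_def by (simp add: sum_distrib_left mult_ac)

lemma curv_diff:
  assumes CR: "curvature_tensor R" and CT: "curvature_tensor T"
  shows "curvature_tensor (\<lambda>a b c d. R a b c d - k * T a b c d)"
  unfolding curvature_tensor_def
proof (intro conjI allI)
  fix a b c d
  show "R a b c d - k * T a b c d = - (R b a c d - k * T b a c d)"
    using curv_skew12[OF CR, of b a c d] curv_skew12[OF CT, of b a c d] by simp
  show "R a b c d - k * T a b c d = - (R a b d c - k * T a b d c)"
    using curv_skew34[OF CR, of a b d c] curv_skew34[OF CT, of a b d c] by simp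
  have r: "R a b c d + R b c a d + R c a b d = 0" by (rule curv_bianchi[OF CR])
  have t: "k * T a b c d + k * T b c a d + k * T c a b d = 0"
    using curv_bianchi[OF CT, of a b c d] by (metis distrib_left mult_zero_right)
  show "R a b c d - k * T a b c d + (R b c a d - k * T b c a d) + (R c a b d - k * T c a b d) = 0"
    using r t by linarith
qed

lemma kaehler_diff:
  assumes KR: "kaehler_curvature R J" and KT: "kaehler_curvature T J"
  shows "kaehler_curvature (\<lambda>a b c d. R a b c d - k * T a b c d) J"
  unfolding kaehler_curvature_def
  using curv_diff[OF kc_curv[OF KR] kc_curv[OF KT]] kc_herm[OF KR]
  by (simp add: Rform_tensor_diff kc_K1[OF KR] kc_K1[OF KT])

theorem theorem6p4:
  fixes M :: "'p set" and R :: "('p,'d::finite) curv" and J :: "'p \<Rightarrow> real^'d \<Rightarrow> real^'d"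
    and n :: nat and L1 L2 :: real
  assumes dim: "CARD('d) = 2 * n"
    and nonempty: "M \<noteq> {}"
    and kaehler: "\<forall>p\<in>M. kaehler_curvature (R p) (J p)"
    and ah: "asymptotic_harmonic2 M R L1 L2"
  shows "L1\<^sup>2 - 2 * (real n + 1)\<^sup>2 / (real n + 7) * L2 \<le> 0 \<and>
    (L1\<^sup>2 - 2 * (real n + 1)\<^sup>2 / (real n + 7) * L2 = 0 \<longleftrightarrow>
      (\<forall>p\<in>M. const_holo_sec_curv (R p) (J p)
                 (scalar_curv (R p) / (real n * (real n + 1)))))"
proof -
  have npos: "real n > 0" using dim by (metis of_nat_0_less_iff zero_less_card_finite nat_0_less_mult_iff)
  define E where "E = L1\<^sup>2 - 2 * (real n + 1)\<^sup>2 / (real n + 7) * L2"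
  define c0 where "c0 = 3 * (2 * real n + 2) / (4 * real n * (2 * real n + 14))"
  have c0pos: "c0 > 0" unfolding c0_def using npos by simp
  define \<nu> where "\<nu> p = scalar_curv (R p) / (2 * real n * (2 * real n + 2))" for p
  define D where "D p = (\<lambda>a b c d. R p a b c d - \<nu> p * Tt (J p) a b c d)" for p
  have ident: "E = - c0 * normsq (D p)" if pM: "p \<in> M" for p
  proof -
    have K: "kaehler_curvature (R p) (J p)" using kaehler pM by blast
    have L: "\<forall>x::real^'d. (\<Sum>a\<in>UNIV. Rform (R p) (frame a) x x (frame a)) = L1 * norm x ^ 2"
      using ah pM unfolding asymptotic_harmonic2_def by blast
    have Q: "\<forall>x::real^'d. (\<Sum>a\<in>UNIV. \<Sum>b\<in>UNIV. Rform (R p) (frame a) x x (frame b) *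
                                Rform (R p) (frame b) x x (frame a)) = L2 * norm x ^ 4"
      using ah pM unfolding asymptotic_harmonic2_def by blast
    show ?thesis unfolding E_def c0_def D_def \<nu>_def by (rule point_identity[OF K dim L Q])
  qed
  obtain p0 where p0: "p0 \<in> M" using nonempty by blast
  have part1: "E \<le> 0" using ident[OF p0] c0pos normsq_nonneg[of "D p0"]
    by (simp add: mult_nonneg_nonneg)
  have four_nu: "4 * \<nu> p = scalar_curv (R p) / (real n * (real n + 1))" for p
  proof -
    have e: "2 * real n * (2 * real n + 2) = 4 * (real n * (real n + 1))" by (simp add: algebra_simps)
    show ?thesis unfolding \<nu>_def e by simp
  qed
  have DK: "kaehler_curvature (D p) (J p)" if pM: "p \<in> M" for p
  proof -
    have K: "kaehler_curvature (R p) (J p)" using kaehler pM by blast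
    show ?thesis unfolding D_def
      by (rule kaehler_diff[OF K Tt_kaehler[OF kc_herm[OF K]]])
  qed
  have RformD: "Rform (D p) x y z w = Rform (R p) x y z w - \<nu> p * Tf (J p) x y z w"
    if pM: "p \<in> M" for p x y z w
  proof -
    have K: "kaehler_curvature (R p) (J p)" using kaehler pM by blast
    show ?thesis unfolding D_def Rform_tensor_diff Rform_Tt[OF kc_herm[OF K]] ..
  qed
  have part2: "E = 0 \<longleftrightarrow> (\<forall>p\<in>M. const_holo_sec_curv (R p) (J p) (scalar_curv (R p) / (real n * (real n + 1))))"
  proof
    assume E0: "E = 0"
    show "\<forall>p\<in>M. const_holo_sec_curv (R p) (J p) (scalar_curv (R p) / (real n * (real n + 1)))"
    proof (intro ballI)
      fix p assume pM: "p \<in> M"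
      have K: "kaehler_curvature (R p) (J p)" using kaehler pM by blast
      have H: "hermitian_structure (J p)" by (rule kc_herm[OF K])
      have "normsq (D p) = 0" using ident[OF pM] E0 c0pos by simp
      then have z: "D p a b c d = 0" for a b c d by (rule normsq_zero)
      show "const_holo_sec_curv (R p) (J p) (scalar_curv (R p) / (real n * (real n + 1)))"
        unfolding const_holo_sec_curv_def
      proof
        fix x
        have "Rform (D p) x (J p x) (J p x) x = 0"
        proof -
          have "D p = (\<lambda>a b c d. 0)" using z by (intro ext) simp
          then show ?thesis by (simp add: Rform_zero)
        qed
        then have "Rform (R p) x (J p x) (J p x) x = \<nu> p * (4 * norm x ^ 4)"
          using RformD[OF pM] Tf_holo[OF H] by simp
        also have "\<nu> p * (4 * norm x ^ 4) = (4 * \<nu> p) * norm x ^ 4" by simp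
        finally show "Rform (R p) x (J p x) (J p x) x = scalar_curv (R p) / (real n * (real n + 1)) * norm x ^ 4"
          unfolding four_nu .
      qed
    qed
  next
    assume A: "\<forall>p\<in>M. const_holo_sec_curv (R p) (J p) (scalar_curv (R p) / (real n * (real n + 1)))"
    have K: "kaehler_curvature (R p0) (J p0)" using kaehler p0 by blast
    have H: "hermitian_structure (J p0)" by (rule kc_herm[OF K])
    have hz: "Rform (D p0) x (J p0 x) (J p0 x) x = 0" for x
    proof -
      have "Rform (R p0) x (J p0 x) (J p0 x) x = scalar_curv (R p0) / (real n * (real n + 1)) * norm x ^ 4"
        using A p0 unfolding const_holo_sec_curv_def by blast
      then have "Rform (D p0) x (J p0 x) (J p0 x) x
          = scalar_curv (R p0) / (real n * (real n + 1)) * norm x ^ 4 - \<nu> p0 * (4 * norm x ^ 4)"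
        using RformD[OF p0] Tf_holo[OF H] by simp
      also have "\<dots> = (4 * \<nu> p0) * norm x ^ 4 - \<nu> p0 * (4 * norm x ^ 4)"
        unfolding four_nu ..
      finally show ?thesis by simp
    qed
    have "D p0 a b c d = 0" for a b c d by (rule kaehler_holo_zero[OF DK[OF p0] hz])
    then have "normsq (D p0) = 0" unfolding normsq_def by simp
    then show "E = 0" using ident[OF p0] by simp
  qed
  show ?thesis using part1 part2 unfolding E_def by blast
qed


end
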